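(* Let $|\psi_{ABC}\rangle\in\mathbb{C}^2\otimes\mathbb{C}^2\otimes\mathbb{C}^d$ be a pure state that is entangled with respect to the bipartition $AB|C$. Then there exist projective measurements $\{P_{a|0}\}_{a=0}^1,\{P_{a|1}\}_{a=0}^1$ on subsystem $A$ and $\{Q_{b|0}\}_{b=0}^1,\{Q_{b|1}\}_{b=0}^1$ on subsystem $B$ such that the assemblage $\Sigma=\{\sigma_{ab|xy}\}$, $\sigma_{ab|xy}=\mathrm{Tr}_{AB}\big((P_{a|x}\otimes Q_{b|y}\otimes\mathbb{1})|\psi_{ABC}\rangle\langle\psi_{ABC}|\big)$ ($a,b,x,y\in\{0,1\}$), is on the edge of the set of no-signaling assemblages.
   Context: Scenario with two untrusted parties, binary outcomes $a,b\in\{0,1\}$ and binary settings $x,y\in\{0,1\}$, trusted system $\mathbb{C}^d$. A no-signaling assemblage is a collection of positive semidefinite operators $\sigma_{ab|xy}$ on $\mathbb{C}^d$ with $\sum_{a,b}\sigma_{ab|xy}=\rho$ independent of $x,y$ and of trace one, $\sum_b\sigma_{ab|xy}$ independent of $y$, and $\sum_a\sigma_{ab|xy}$ independent of $x$. An LHS assemblage is one of the form $\sigma_{ab|xy}=\sum_j q_j p_j(a|x)p'_j(b|y)\rho_j$ with probability weights $q_j$, density operators $\rho_j$ and conditional probability distributions $p_j,p'_j$. A no-signaling assemblage $\Sigma$ is on the edge if whenever $\Sigma=\epsilon\Sigma_1+(1-\epsilon)\Sigma_2$ with $\epsilon\in[0,1]$, $\Sigma_1$ LHS and $\Sigma_2$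 no-signaling, necessarily $\epsilon=0$. *)

theory Defs
  imports Complex_Main
begin

text \<open>A vector in C^n is a function nat => complex (entries i < n relevant);
an operator on C^n is a function nat => nat => complex (entries i,j < n relevant).
A tripartite pure state in C^2 (x) C^2 (x) C^d is psi a b c with a,b < 2, c < d.
An assemblage is a function S a b x y i j giving entry (i,j) of sigma_{ab|xy}.\<close>

definition psd :: "nat \<Rightarrow> (nat \<Rightarrow> nat \<Rightarrow> complex) \<Rightarrow> bool" where
  "psd n M \<longleftrightarrow> (\<forall>v :: nat \<Rightarrow> complex.
     (\<Sum>i<n. \<Sum>j<n. cnj (v i) * M i j * v j) \<in> \<real> \<and>
     0 \<le> Re (\<Sum>i<n. \<Sum>j<n. cnj (v i) * M i j * v j))"

definition trace_op :: "nat \<Rightarrow> (nat \<Rightarrow> nat \<Rightarrow> complex) \<Rightarrow> complex" where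
  "trace_op n M = (\<Sum>i<n. M i i)"

definition density_op :: "nat \<Rightarrow> (nat \<Rightarrow> nat \<Rightarrow> complex) \<Rightarrow> bool" where
  "density_op n M \<longleftrightarrow> psd n M \<and> trace_op n M = 1"

definition projector :: "nat \<Rightarrow> (nat \<Rightarrow> nat \<Rightarrow> complex) \<Rightarrow> bool" where
  "projector n P \<longleftrightarrow> (\<forall>i<n. \<forall>j<n. P i j = cnj (P j i)) \<and>
     (\<forall>i<n. \<forall>j<n. (\<Sum>k<n. P i k * P k j) = P i j)"

definition proj_meas2 :: "(nat \<Rightarrow> nat \<Rightarrow> nat \<Rightarrow> complex) \<Rightarrow> bool" where
  "proj_meas2 P \<longleftrightarrow> projector 2 (P 0) \<and> projector 2 (P 1) \<and>
     (\<forall>i<2. \<forall>j<2. P 0 i j + P 1 i j = (if i = j then 1 else 0))"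

definition pure_state :: "nat \<Rightarrow> (nat \<Rightarrow> nat \<Rightarrow> nat \<Rightarrow> complex) \<Rightarrow> bool" where
  "pure_state d psi \<longleftrightarrow> (\<Sum>a<2. \<Sum>b<2. \<Sum>c<d. (cmod (psi a b c))\<^sup>2) = 1"

definition product_AB_C :: "nat \<Rightarrow> (nat \<Rightarrow> nat \<Rightarrow> nat \<Rightarrow> complex) \<Rightarrow> bool" where
  "product_AB_C d psi \<longleftrightarrow> (\<exists>(phi :: nat \<Rightarrow> nat \<Rightarrow> complex) (chi :: nat \<Rightarrow> complex).
     \<forall>a<2. \<forall>b<2. \<forall>c<d. psi a b c = phi a b * chi c)"

definition entangled_AB_C :: "nat \<Rightarrow> (nat \<Rightarrow> nat \<Rightarrow> nat \<Rightarrow> complex) \<Rightarrow> bool" where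
  "entangled_AB_C d psi \<longleftrightarrow> \<not> product_AB_C d psi"

type_synonym assemblage = "nat \<Rightarrow> nat \<Rightarrow> nat \<Rightarrow> nat \<Rightarrow> nat \<Rightarrow> nat \<Rightarrow> complex"

definition no_signaling :: "nat \<Rightarrow> assemblage \<Rightarrow> bool" where
  "no_signaling d S \<longleftrightarrow>
     (\<forall>a<2. \<forall>b<2. \<forall>x<2. \<forall>y<2. psd d (S a b x y)) \<and>
     (\<exists>rho. trace_op d rho = 1 \<and>
        (\<forall>x<2. \<forall>y<2. \<forall>i<d. \<forall>j<d. (\<Sum>a<2. \<Sum>b<2. S a b x y i j) = rho i j)) \<and>
     (\<forall>a<2. \<forall>x<2. \<forall>i<d. \<forall>j<d. (\<Sum>b<2. S a b x 0 i j) = (\<Sum>b<2. S a b x 1 i j)) \<and>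
     (\<forall>b<2. \<forall>y<2. \<forall>i<d. \<forall>j<d. (\<Sum>a<2. S a b 0 y i j) = (\<Sum>a<2. S a b 1 y i j))"

definition cond_prob :: "(nat \<Rightarrow> nat \<Rightarrow> real) \<Rightarrow> bool" where
  "cond_prob p \<longleftrightarrow> (\<forall>a<2. \<forall>x<2. 0 \<le> p a x) \<and> (\<forall>x<2. (\<Sum>a<2. p a x) = 1)"

definition LHS :: "nat \<Rightarrow> assemblage \<Rightarrow> bool" where
  "LHS d S \<longleftrightarrow> (\<exists>(n::nat) (q :: nat \<Rightarrow> real) (p :: nat \<Rightarrow> nat \<Rightarrow> nat \<Rightarrow> real)
       (p' :: nat \<Rightarrow> nat \<Rightarrow> nat \<Rightarrow> real) (rho :: nat \<Rightarrow> nat \<Rightarrow> nat \<Rightarrow> complex).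
     (\<forall>k<n. 0 \<le> q k) \<and> (\<Sum>k<n. q k) = 1 \<and>
     (\<forall>k<n. cond_prob (p k) \<and> cond_prob (p' k) \<and> density_op d (rho k)) \<and>
     (\<forall>a<2. \<forall>b<2. \<forall>x<2. \<forall>y<2. \<forall>i<d. \<forall>j<d.
        S a b x y i j = (\<Sum>k<n. complex_of_real (q k * p k a x * p' k b y) * rho k i j)))"

definition on_edge :: "nat \<Rightarrow> assemblage \<Rightarrow> bool" where
  "on_edge d S \<longleftrightarrow> no_signaling d S \<and>
     (\<forall>(\<epsilon>::real) S1 S2. 0 \<le> \<epsilon> \<and> \<epsilon> \<le> 1 \<and> LHS d S1 \<and> no_signaling d S2 \<and>
        (\<forall>a<2. \<forall>b<2. \<forall>x<2. \<forall>y<2. \<forall>i<d. \<forall>j<d.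
           S a b x y i j = complex_of_real \<epsilon> * S1 a b x y i j
                           + complex_of_real (1 - \<epsilon>) * S2 a b x y i j)
        \<longrightarrow> \<epsilon> = 0)"

text \<open>sigma_{ab|xy} = Tr_AB((P_{a|x} (x) Q_{b|y} (x) 1) |psi><psi|), entry (c,c').
  P x a is the 2x2 matrix P_{a|x}.\<close>
definition induced_assemblage ::
  "nat \<Rightarrow> (nat \<Rightarrow> nat \<Rightarrow> nat \<Rightarrow> complex) \<Rightarrow> (nat \<Rightarrow> nat \<Rightarrow> nat \<Rightarrow> nat \<Rightarrow> complex)
     \<Rightarrow> (nat \<Rightarrow> nat \<Rightarrow> nat \<Rightarrow> nat \<Rightarrow> complex) \<Rightarrow> assemblage" where
  "induced_assemblage d psi P Q a b x y c c' =
     (\<Sum>i<2. \<Sum>i'<2. \<Sum>j<2. \<Sum>j'<2.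
        P x a i' i * Q y b j' j * psi i j c * cnj (psi i' j' c'))"

end

theory Submission
  imports Defs
begin


lemma sum2: "(\<Sum>i<(2::nat). f i) = f 0 + f 1"
  by (simp add: numeral_2_eq_2)
lemma all2: "(\<forall>i<(2::nat). P i) \<longleftrightarrow> P 0 \<and> P 1"
  by (auto simp: numeral_2_eq_2 less_Suc_eq)

definition mv :: "nat \<Rightarrow> nat \<Rightarrow> nat \<Rightarrow> complex" where
  "mv x a i = (if x = 0 then (if i = a then 1 else 0) else (if i = 0 then 1 else (if a = 0 then 1 else -1)))"
definition Nm :: "nat \<Rightarrow> complex" where "Nm x = (if x = 0 then 1 else 2)"
definition PP :: "nat \<Rightarrow> nat \<Rightarrow> nat \<Rightarrow> nat \<Rightarrow> complex" where
  "PP x a i' i = mv x a i' * mv x a i / Nm x"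
definition vv :: "(nat \<Rightarrow> nat \<Rightarrow> nat \<Rightarrow> complex) \<Rightarrow> nat \<Rightarrow> nat \<Rightarrow> nat \<Rightarrow> nat \<Rightarrow> nat \<Rightarrow> complex" where
  "vv psi x a y b c = (\<Sum>i<2. \<Sum>j<2. mv x a i * mv y b j * psi i j c)"

lemma cnj_mv[simp]: "cnj (mv x a i) = mv x a i"
  by (simp add: mv_def)
lemma Nm_nz[simp]: "Nm x \<noteq> 0" by (simp add: Nm_def)

lemma proj_PP: "x < 2 \<Longrightarrow> proj_meas2 (PP x)"
  by (auto simp: proj_meas2_def projector_def PP_def mv_def Nm_def sum2 all2 less_Suc_eq numeral_2_eq_2)

lemma sigma_form:
  "induced_assemblage d psi PP PP a b x y c c' = vv psi x a y b c * cnj (vv psi x a y b c') / (Nm x * Nm y)"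
  unfolding induced_assemblage_def vv_def PP_def
  by (simp add: sum2 field_simps)



lemma less2: "(x::nat) < 2 \<longleftrightarrow> x = 0 \<or> x = 1" by auto

lemma rho_form: "x < 2 \<Longrightarrow> y < 2 \<Longrightarrow>
  (\<Sum>a<2. \<Sum>b<2. induced_assemblage d psi PP PP a b x y c c') = (\<Sum>i<2. \<Sum>j<2. psi i j c * cnj (psi i j c'))"
  unfolding less2 induced_assemblage_def PP_def
  by (elim disjE; simp add: sum2 mv_def Nm_def field_simps)

lemma margB: "x < 2 \<Longrightarrow>
  (\<Sum>b<2. induced_assemblage d psi PP PP a b x 0 c c') = (\<Sum>b<2. induced_assemblage d psi PP PP a b x 1 c c')"
  unfolding less2 induced_assemblage_def PP_def
  by (elim disjE; simp add: sum2 mv_def Nm_def field_simps)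

lemma margA: "y < 2 \<Longrightarrow>
  (\<Sum>a<2. induced_assemblage d psi PP PP a b 0 y c c') = (\<Sum>a<2. induced_assemblage d psi PP PP a b 1 y c c')"
  unfolding less2 induced_assemblage_def PP_def
  by (elim disjE; simp add: sum2 mv_def Nm_def field_simps)

lemma quad_rank1:
  "(\<Sum>i<d. \<Sum>j<d. cnj (w i) * (v i * cnj (v j) / N) * w j) =
   (\<Sum>i<d. cnj (w i) * v i) * cnj (\<Sum>j<d. cnj (w j) * v j) / N"
  apply (simp add: sum_distrib_left sum_distrib_right sum_divide_distrib mult_ac)
  apply (rule sum.swap)
  done

lemma Nm_prod: "x < 2 \<Longrightarrow> y < 2 \<Longrightarrow> \<exists>r::real. r > 0 \<and> Nm x * Nm y = complex_of_real r"
  apply (rule exI[of _ "Re (Nm x * Nm y)"])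
  unfolding less2 Nm_def by (elim disjE; simp)

lemma psd_sigma: "x < 2 \<Longrightarrow> y < 2 \<Longrightarrow> psd d (induced_assemblage d psi PP PP a b x y)"
proof -
  assume xy: "x < 2" "y < 2"
  obtain r where r: "r > 0" "Nm x * Nm y = complex_of_real r" using Nm_prod[OF xy] by blast
  show ?thesis unfolding psd_def sigma_form
  proof
    fix w :: "nat \<Rightarrow> complex"
    define z where "z = (\<Sum>i<d. cnj (w i) * vv psi x a y b i)"
    have e: "(\<Sum>i<d. \<Sum>j<d. cnj (w i) * (vv psi x a y b i * cnj (vv psi x a y b j) / (Nm x * Nm y)) * w j)
      = complex_of_real ((cmod z)^2 / r)"
    proof -
      have "z * cnj z = complex_of_real ((cmod z)^2)" using complex_norm_square[of z] by simp
      then show ?thesis unfolding quad_rank1 z_def[symmetric] r(2) by simp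
    qed
    show "(\<Sum>i<d. \<Sum>j<d. cnj (w i) * (vv psi x a y b i * cnj (vv psi x a y b j) / (Nm x * Nm y)) * w j) \<in> \<real> \<and>
         0 \<le> Re (\<Sum>i<d. \<Sum>j<d. cnj (w i) * (vv psi x a y b i * cnj (vv psi x a y b j) / (Nm x * Nm y)) * w j)"
      unfolding e using r by simp
  qed
qed



definition Qf :: "nat \<Rightarrow> (nat \<Rightarrow> nat \<Rightarrow> complex) \<Rightarrow> (nat \<Rightarrow> complex) \<Rightarrow> complex" where
  "Qf d M w = (\<Sum>i<d. \<Sum>j<d. cnj (w i) * M i j * w j)"
definition Bf :: "nat \<Rightarrow> (nat \<Rightarrow> nat \<Rightarrow> complex) \<Rightarrow> (nat \<Rightarrow> complex) \<Rightarrow> (nat \<Rightarrow> complex) \<Rightarrow> complex" where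
  "Bf d M w z = (\<Sum>i<d. \<Sum>j<d. cnj (w i) * M i j * z j)"

lemma psd_Qf: "psd d M \<longleftrightarrow> (\<forall>w. Qf d M w \<in> \<real> \<and> 0 \<le> Re (Qf d M w))"
  unfolding psd_def Qf_def by simp

lemma Qf_expand: "Qf d M (\<lambda>i. w i + t * z i) = Qf d M w + t * Bf d M w z + cnj t * Bf d M z w + cnj t * t * Qf d M z"
  unfolding Qf_def Bf_def
  by (simp add: algebra_simps sum.distrib sum_distrib_left)

lemma real_quad_zero:
  fixes R q :: real
  assumes q: "q \<ge> 0" and H: "\<And>s. 0 \<le> s * R + s^2 * q"
  shows "R = 0"
proof -
  define s where "s = - R / (q + 1)"
  have q1: "q + 1 > 0" using q by simp
  have "s * R + s^2 * q = (- (R^2) * (q+1) + R^2 * q) / (q+1)^2"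
    unfolding s_def using q1 by (simp add: power_divide diff_divide_distrib add_divide_distrib power2_eq_square)
  also have "\<dots> = - (R^2) / (q+1)^2" by (simp add: algebra_simps)
  finally have "0 \<le> - (R^2) / (q+1)^2" using H[of s] by simp
  hence "R^2 \<le> 0" using q1 by (simp add: divide_le_0_iff)
  thus "R = 0" by simp
qed

lemma psd_zero_orth:
  assumes psd: "psd d M" and w0: "Qf d M w = 0"
  shows "Bf d M w z = 0"
proof -
  define X where "X = Bf d M w z"
  define Y where "Y = Bf d M z w"
  define q where "q = Re (Qf d M z)"
  have qr: "Qf d M z = complex_of_real q" using psd unfolding psd_Qf q_def
    by (metis Reals_cases Re_complex_of_real)
  have q0: "q \<ge> 0" using psd unfolding psd_Qf q_def by simp
  have real_t: "Qf d M (\<lambda>i. w i + complex_of_real s * z i) = complex_of_real s * (X + Y) + complex_of_real (s^2 * q)" for s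
    unfolding Qf_expand X_def[symmetric] Y_def[symmetric] w0 qr by (simp add: algebra_simps power2_eq_square)
  have imag_t: "Qf d M (\<lambda>i. w i + (\<i> * complex_of_real s) * z i) = complex_of_real s * (\<i> * (X - Y)) + complex_of_real (s^2 * q)" for s
    unfolding Qf_expand X_def[symmetric] Y_def[symmetric] w0 qr by (simp add: algebra_simps power2_eq_square)
  have A: "X + Y = 0"
  proof -
    have r1: "complex_of_real 1 * (X + Y) + complex_of_real (1^2 * q) \<in> \<real>"
      using psd unfolding psd_Qf real_t[symmetric] by blast
    hence "X + Y \<in> \<real>" by (metis Reals_diff Reals_of_real add_diff_cancel_right' mult_1 of_real_1)
    then obtain R where R: "X + Y = complex_of_real R" by (metis Reals_cases)
    have "0 \<le> s * R + s^2 * q" for s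
      using psd unfolding psd_Qf by (metis real_t R Re_complex_of_real of_real_add of_real_mult)
    hence "R = 0" by (intro real_quad_zero[OF q0])
    thus ?thesis using R by simp
  qed
  have B: "X - Y = 0"
  proof -
    have r1: "complex_of_real 1 * (\<i> * (X - Y)) + complex_of_real (1^2 * q) \<in> \<real>"
      using psd unfolding psd_Qf imag_t[symmetric] by blast
    hence "\<i> * (X - Y) \<in> \<real>" by (metis Reals_diff Reals_of_real add_diff_cancel_right' mult_1 of_real_1)
    then obtain R where R: "\<i> * (X - Y) = complex_of_real R" by (metis Reals_cases)
    have "0 \<le> s * R + s^2 * q" for s
      using psd unfolding psd_Qf by (metis imag_t R Re_complex_of_real of_real_add of_real_mult)
    hence "R = 0" by (intro real_quad_zero[OF q0])
    thus ?thesis using R by simp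
  qed
  from A B show ?thesis unfolding X_def[symmetric] by (simp add: algebra_simps)
qed

lemma sum_delta_l: "i < (d::nat) \<Longrightarrow> (\<Sum>c<d. (if c = i then a else 0) * f c) = a * (f i :: complex)"
proof -
  assume "i < d"
  have "(\<Sum>c<d. (if c = i then a else 0) * f c) = (\<Sum>c<d. if c = i then a * f i else 0)" by (rule sum.cong) auto
  also have "\<dots> = a * f i" using \<open>i < d\<close> by simp
  finally show ?thesis .
qed

lemma sum_delta_r: "j < (d::nat) \<Longrightarrow> (\<Sum>c<d. g c * (if c = j then (1::complex) else 0)) = g j"
proof -
  assume "j < d"
  have "(\<Sum>c<d. g c * (if c = j then (1::complex) else 0)) = (\<Sum>c<d. if c = j then g j else 0)" by (rule sum.cong) auto
  also have "\<dots> = g j" using \<open>j < d\<close> by simp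
  finally show ?thesis .
qed

lemma rank1_transfer:
  assumes psd: "psd d M" and c0: "c0 < d"
    and H: "\<And>w. (\<Sum>c<d. cnj (w c) * v c) = 0 \<Longrightarrow> Qf d M w = 0"
    and ij: "i < d" "j < d"
  shows "v j * M i c0 = v i * M j c0"
proof -
  define w where "w = (\<lambda>c. (if c = i then cnj (v j) else 0) - (if c = j then cnj (v i) else 0))"
  define z where "z = (\<lambda>c::nat. if c = c0 then (1::complex) else 0)"
  have "(\<Sum>c<d. cnj (w c) * v c) = v j * v i - v i * v j"
  proof -
    have "(\<Sum>c<d. cnj (w c) * v c) = (\<Sum>c<d. (if c = i then v j else 0) * v c) - (\<Sum>c<d. (if c = j then v i else 0) * v c)"
      unfolding w_def by (simp add: left_diff_distrib sum_subtractf if_distrib[of cnj] cong: if_cong)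
    thus ?thesis using ij by (simp add: sum_delta_l)
  qed
  hence "Qf d M w = 0" using H by simp
  hence "Bf d M w z = 0" by (rule psd_zero_orth[OF psd])
  moreover have "Bf d M w z = v j * M i c0 - v i * M j c0"
  proof -
    have "Bf d M w z = (\<Sum>c<d. cnj (w c) * M c c0)"
      unfolding Bf_def
    proof (rule sum.cong)
      fix x assume "x \<in> {..<d}"
      show "(\<Sum>j<d. cnj (w x) * M x j * z j) = cnj (w x) * M x c0"
        using sum_delta_r[OF c0, of "\<lambda>j. cnj (w x) * M x j"] unfolding z_def by simp
    qed simp
    also have "\<dots> = (\<Sum>c<d. (if c = i then v j else 0) * M c c0) - (\<Sum>c<d. (if c = j then v i else 0) * M c c0)"
      unfolding w_def by (simp add: left_diff_distrib sum_subtractf if_distrib[of cnj] cong: if_cong)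
    finally show ?thesis using ij by (simp add: sum_delta_l)
  qed
  ultimately show ?thesis by simp
qed



lemma mix:
  assumes a: "a0 < 2" "a1 < 2"
    and h0: "\<forall>c<d. (\<Sum>i<2. mv 0 a0 i * h i c) = t0 * \<chi> c"
    and h1: "\<forall>c<d. (\<Sum>i<2. mv 1 a1 i * h i c) = t1 * \<chi> c"
  shows "\<exists>r. \<forall>i<2. \<forall>c<d. h i c = r i * \<chi> c"
proof -
  have A: "\<And>c. c < d \<Longrightarrow> (if a0 = 0 then h 0 c else h 1 c) = t0 * \<chi> c"
    using h0 a by (auto simp: sum2 mv_def less2)
  have B: "\<And>c. c < d \<Longrightarrow> (if a1 = 0 then h 0 c + h 1 c else h 0 c - h 1 c) = t1 * \<chi> c"
    using h1 a by (auto simp: sum2 mv_def less2)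
  consider "a0 = 0" "a1 = 0" | "a0 = 0" "a1 = 1" | "a0 = 1" "a1 = 0" | "a0 = 1" "a1 = 1"
    using a by (auto simp: less2)
  then show ?thesis
  proof cases
    case 1
    show ?thesis
    proof (intro exI[of _ "\<lambda>i. if i = 0 then t0 else t1 - t0"] allI impI)
      fix i c assume "i < (2::nat)" "c < d"
      then show "h i c = (if i = 0 then t0 else t1 - t0) * \<chi> c"
        using A[of c] B[of c] 1 by (auto simp: less2 algebra_simps eq_diff_eq)
    qed
  next
    case 2
    show ?thesis
    proof (intro exI[of _ "\<lambda>i. if i = 0 then t0 else t0 - t1"] allI impI)
      fix i c assume "i < (2::nat)" "c < d"
      then show "h i c = (if i = 0 then t0 else t0 - t1) * \<chi> c"
        using A[of c] B[of c] 2 by (auto simp: less2 algebra_simps eq_diff_eq)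
    qed
  next
    case 3
    show ?thesis
    proof (intro exI[of _ "\<lambda>i. if i = 0 then t1 - t0 else t0"] allI impI)
      fix i c assume "i < (2::nat)" "c < d"
      then show "h i c = (if i = 0 then t1 - t0 else t0) * \<chi> c"
        using A[of c] B[of c] 3 by (auto simp: less2 algebra_simps eq_diff_eq)
    qed
  next
    case 4
    show ?thesis
    proof (intro exI[of _ "\<lambda>i. if i = 0 then t1 + t0 else t0"] allI impI)
      fix i c assume "i < (2::nat)" "c < d"
      then show "h i c = (if i = 0 then t1 + t0 else t0) * \<chi> c"
        using A[of c] B[of c] 4 by (auto simp: less2 algebra_simps eq_diff_eq)
    qed
  qed
qed

lemma vv_split: "vv psi x a y b c = (\<Sum>i<2. mv x a i * (\<Sum>j<2. mv y b j * psi i j c))"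
  unfolding vv_def by (simp add: sum_distrib_left mult.assoc)

lemma product_from_parallel:
  assumes ax: "\<forall>x<2. ax x < 2" and bx: "\<forall>y<2. by y < 2"
    and par: "\<forall>x<2. \<forall>y<2. \<forall>c<d. vv psi x (ax x) y (by y) c = t x y * \<chi> c"
  shows "product_AB_C d psi"
proof -
  have "\<forall>y<2. \<exists>r. \<forall>i<2. \<forall>c<d. (\<Sum>j<2. mv y (by y) j * psi i j c) = r i * \<chi> c"
  proof (intro allI impI)
    fix y :: nat assume y: "y < 2"
    show "\<exists>r. \<forall>i<2. \<forall>c<d. (\<Sum>j<2. mv y (by y) j * psi i j c) = r i * \<chi> c"
      by (rule mix[of "ax 0" "ax 1" d _ "t 0 y" \<chi> "t 1 y"]) (use ax par y in \<open>auto simp: vv_split\<close>)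
  qed
  then obtain r where r: "\<forall>y<2. \<forall>i<2. \<forall>c<d. (\<Sum>j<2. mv y (by y) j * psi i j c) = r y i * \<chi> c"
    by metis
  have "\<forall>i<2. \<exists>f. \<forall>j<2. \<forall>c<d. psi i j c = f j * \<chi> c"
  proof (intro allI impI)
    fix i :: nat assume i: "i < 2"
    show "\<exists>f. \<forall>j<2. \<forall>c<d. psi i j c = f j * \<chi> c"
      by (rule mix[of "by 0" "by 1" d _ "r 0 i" \<chi> "r 1 i"]) (use bx r i in auto)
  qed
  then obtain f where f: "\<forall>i<2. \<forall>j<2. \<forall>c<d. psi i j c = f i j * \<chi> c"
    by metis
  show ?thesis unfolding product_AB_C_def using f by blast
qed



lemma mcnj: "z * cnj z = (complex_of_real (cmod z))^2"
  using complex_norm_square[of z] by simp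

lemma trace_rho:
  assumes "pure_state d psi"
  shows "trace_op d (\<lambda>c c'. \<Sum>i<2. \<Sum>j<2. psi i j c * cnj (psi i j c')) = 1"
proof -
  have "trace_op d (\<lambda>c c'. \<Sum>i<2. \<Sum>j<2. psi i j c * cnj (psi i j c'))
      = (\<Sum>c<d. \<Sum>i<2. \<Sum>j<2. complex_of_real ((cmod (psi i j c))^2))"
    unfolding trace_op_def by (simp add: mcnj)
  also have "\<dots> = complex_of_real (\<Sum>i<2. \<Sum>j<2. \<Sum>c<d. (cmod (psi i j c))^2)"
    by (simp add: sum2 sum.distrib)
  also have "\<dots> = 1" using assms unfolding pure_state_def by simp
  finally show ?thesis .
qed

lemma ns_induced:
  assumes "pure_state d psi"
  shows "no_signaling d (induced_assemblage d psi PP PP)"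
  unfolding no_signaling_def
  apply (intro conjI allI impI)
     apply (rule psd_sigma; simp)
    apply (rule exI[of _ "\<lambda>c c'. \<Sum>i<2. \<Sum>j<2. psi i j c * cnj (psi i j c')"])
    apply (simp add: trace_rho[OF assms] rho_form)
   apply (simp add: margB)
  apply (simp add: margA)
  done



lemma Qf_S1:
  assumes "\<forall>a<2. \<forall>b<2. \<forall>x<2. \<forall>y<2. \<forall>i<d. \<forall>j<d.
        S a b x y i j = (\<Sum>k<n. complex_of_real (q k * p k a x * p' k b y) * rho k i j)"
    and "a < 2" "b < 2" "x < 2" "y < 2"
  shows "Qf d (S a b x y) w = (\<Sum>k<n. complex_of_real (q k * p k a x * p' k b y) * Qf d (rho k) w)"
proof -
  have "Qf d (S a b x y) w = (\<Sum>i<d. \<Sum>j<d. cnj (w i) * (\<Sum>k<n. complex_of_real (q k * p k a x * p' k b y) * rho k i j) * w j)"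
    unfolding Qf_def using assms by (intro sum.cong refl) simp
  also have "\<dots> = (\<Sum>i<d. \<Sum>j<d. \<Sum>k<n. complex_of_real (q k * p k a x * p' k b y) * (cnj (w i) * rho k i j * w j))"
    by (simp add: sum_distrib_left sum_distrib_right mult_ac)
  also have "\<dots> = (\<Sum>k<n. complex_of_real (q k * p k a x * p' k b y) * Qf d (rho k) w)"
    unfolding Qf_def sum_distrib_left
    by (subst sum.swap, rule sum.cong[OF refl], subst sum.swap, rule refl)
  finally show ?thesis .
qed

lemma Qf_dec:
  assumes "\<forall>i<d. \<forall>j<d. S i j = complex_of_real e * S1 i j + complex_of_real (1 - e) * S2 i j"
  shows "Qf d S w = complex_of_real e * Qf d S1 w + complex_of_real (1 - e) * Qf d S2 w"
proof -
  have "Qf d S w = (\<Sum>i<d. \<Sum>j<d. complex_of_real e * (cnj (w i) * S1 i j * w j) + complex_of_real (1 - e) * (cnj (w i) * S2 i j * w j))"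
    unfolding Qf_def by (intro sum.cong refl) (simp add: assms[rule_format] algebra_simps)
  also have "\<dots> = complex_of_real e * Qf d S1 w + complex_of_real (1 - e) * Qf d S2 w"
    unfolding Qf_def by (simp add: sum.distrib sum_distrib_left)
  finally show ?thesis .
qed

lemma real_zero: "z \<in> \<real> \<Longrightarrow> Re z = 0 \<Longrightarrow> z = 0"
  by (metis Reals_cases Re_complex_of_real of_real_0)



theorem theorem2:
  fixes d :: nat and psi :: "nat \<Rightarrow> nat \<Rightarrow> nat \<Rightarrow> complex"
  assumes "0 < d"
    and "pure_state d psi"
    and "entangled_AB_C d psi"
  shows "\<exists>P Q. proj_meas2 (P 0) \<and> proj_meas2 (P 1) \<and> proj_meas2 (Q 0) \<and> proj_meas2 (Q 1) \<and>
           on_edge d (induced_assemblage d psi P Q)"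
proof (intro exI conjI)
  show "proj_meas2 (PP 0)" "proj_meas2 (PP 1)" "proj_meas2 (PP 0)" "proj_meas2 (PP 1)" by (simp_all add: proj_PP)
  show "on_edge d (induced_assemblage d psi PP PP)"
    unfolding on_edge_def
  proof (intro conjI allI impI)
    show "no_signaling d (induced_assemblage d psi PP PP)" by (rule ns_induced[OF assms(2)])
  next
    fix \<epsilon> :: real and S1 S2
    assume H: "0 \<le> \<epsilon> \<and> \<epsilon> \<le> 1 \<and> LHS d S1 \<and> no_signaling d S2 \<and>
        (\<forall>a<2. \<forall>b<2. \<forall>x<2. \<forall>y<2. \<forall>i<d. \<forall>j<d.
           induced_assemblage d psi PP PP a b x y i j = complex_of_real \<epsilon> * S1 a b x y i j
                           + complex_of_real (1 - \<epsilon>) * S2 a b x y i j)"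
    hence e0: "0 \<le> \<epsilon>" and e1: "\<epsilon> \<le> 1" and L: "LHS d S1" and N2: "no_signaling d S2"
      and dec: "\<forall>a<2. \<forall>b<2. \<forall>x<2. \<forall>y<2. \<forall>i<d. \<forall>j<d.
           induced_assemblage d psi PP PP a b x y i j = complex_of_real \<epsilon> * S1 a b x y i j
                           + complex_of_real (1 - \<epsilon>) * S2 a b x y i j" by auto
    show "\<epsilon> = 0"
    proof (rule ccontr)
      assume "\<epsilon> \<noteq> 0"
      with e0 have ep: "\<epsilon> > 0" by simp
      from L obtain n :: nat and q :: "nat \<Rightarrow> real" and p p' :: "nat \<Rightarrow> nat \<Rightarrow> nat \<Rightarrow> real" and rho :: "nat \<Rightarrow> nat \<Rightarrow> nat \<Rightarrow> complex" where
        q0: "\<forall>k<n. 0 \<le> q k" and q1: "(\<Sum>k<n. q k) = 1" and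
        cp: "\<forall>k<n. cond_prob (p k) \<and> cond_prob (p' k) \<and> density_op d (rho k)" and
        S1f: "\<forall>a<2. \<forall>b<2. \<forall>x<2. \<forall>y<2. \<forall>i<d. \<forall>j<d.
          S1 a b x y i j = (\<Sum>k<n. complex_of_real (q k * p k a x * p' k b y) * rho k i j)"
        unfolding LHS_def by blast
      obtain k where k: "k < n" "q k > 0"
      proof -
        have "\<exists>k<n. q k > 0"
        proof (rule ccontr)
          assume "\<not> (\<exists>k<n. q k > 0)"
          hence "(\<Sum>k<n. q k) \<le> 0" by (intro sum_nonpos) (meson lessThan_iff not_less)
          with q1 show False by simp
        qed
        thus ?thesis using that by blast
      qed
      have cpk: "cond_prob (p k)" "cond_prob (p' k)" "density_op d (rho k)" using cp k by auto
      have "\<forall>x. \<exists>a. x < 2 \<longrightarrow> a < 2 \<and> 0 < p k a x"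
      proof (intro allI)
        fix x
        show "\<exists>a. x < 2 \<longrightarrow> a < 2 \<and> 0 < p k a x"
        proof (cases "x < 2")
          case True
          have nn: "0 \<le> p k 0 x" "0 \<le> p k 1 x" and s: "p k 0 x + p k 1 x = 1"
            using cpk(1) True unfolding cond_prob_def by (auto simp: sum2)
          show ?thesis
          proof (cases "0 < p k 0 x")
            case True thus ?thesis by (intro exI[of _ 0]) simp
          next
            case False
            with nn s have "0 < p k 1 x" by simp
            thus ?thesis by (intro exI[of _ 1]) simp
          qed
        qed simp
      qed
      then obtain ax where ax: "\<forall>x<2. ax x < 2 \<and> 0 < p k (ax x) x" by metis
      have "\<forall>y. \<exists>b. y < 2 \<longrightarrow> b < 2 \<and> 0 < p' k b y"
      proof (intro allI)
        fix y
        show "\<exists>b. y < 2 \<longrightarrow> b < 2 \<and> 0 < p' k b y"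
        proof (cases "y < 2")
          case True
          have nn: "0 \<le> p' k 0 y" "0 \<le> p' k 1 y" and s: "p' k 0 y + p' k 1 y = 1"
            using cpk(2) True unfolding cond_prob_def by (auto simp: sum2)
          show ?thesis
          proof (cases "0 < p' k 0 y")
            case True thus ?thesis by (intro exI[of _ 0]) simp
          next
            case False
            with nn s have "0 < p' k 1 y" by simp
            thus ?thesis by (intro exI[of _ 1]) simp
          qed
        qed simp
      qed
      then obtain bx where bx: "\<forall>y<2. bx y < 2 \<and> 0 < p' k (bx y) y" by metis
      have psdk: "psd d (rho k)" and trk: "trace_op d (rho k) = 1" using cpk(3) unfolding density_op_def by auto
      obtain c0 where c0: "c0 < d" "rho k c0 c0 \<noteq> 0"
      proof -
        have "\<exists>c0<d. rho k c0 c0 \<noteq> 0"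
        proof (rule ccontr)
          assume "\<not> (\<exists>c0<d. rho k c0 c0 \<noteq> 0)"
          hence "trace_op d (rho k) = 0" unfolding trace_op_def by simp
          with trk show False by simp
        qed
        thus ?thesis using that by blast
      qed
      have key: "\<forall>x<2. \<forall>y<2. \<forall>c<d. vv psi x (ax x) y (bx y) c
                   = (vv psi x (ax x) y (bx y) c0 / rho k c0 c0) * rho k c c0"
      proof (intro allI impI)
        fix x y c :: nat assume x: "x < 2" and y: "y < 2" and c: "c < d"
        define a where "a = ax x"
        define b where "b = bx y"
        have a: "a < 2" "0 < p k a x" using ax x unfolding a_def by auto
        have b: "b < 2" "0 < p' k b y" using bx y unfolding b_def by auto
        define v where "v = vv psi x a y b"
        have Hw: "Qf d (rho k) w = 0" if orth: "(\<Sum>c<d. cnj (w c) * v c) = 0" for w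
        proof -
          have QS: "Qf d (induced_assemblage d psi PP PP a b x y) w = 0"
            unfolding Qf_def sigma_form quad_rank1 v_def[symmetric] orth by simp
          have Qd: "Qf d (induced_assemblage d psi PP PP a b x y) w
              = complex_of_real \<epsilon> * Qf d (S1 a b x y) w + complex_of_real (1 - \<epsilon>) * Qf d (S2 a b x y) w"
            by (intro Qf_dec allI impI) (simp add: dec[rule_format] a(1) b(1) x y)
          have Q1: "Qf d (S1 a b x y) w = (\<Sum>k<n. complex_of_real (q k * p k a x * p' k b y) * Qf d (rho k) w)"
            by (rule Qf_S1[OF S1f a(1) b(1) x y])
          have "\<forall>a<2. \<forall>b<2. \<forall>x<2. \<forall>y<2. psd d (S2 a b x y)" using N2 unfolding no_signaling_def by (rule conjunct1)
          hence "psd d (S2 a b x y)" using a(1) b(1) x y by simp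
          hence R2: "0 \<le> Re (Qf d (S2 a b x y) w)" unfolding psd_Qf by simp
          have terms: "0 \<le> q k' * p k' a x * p' k' b y * Re (Qf d (rho k') w)" if "k' \<in> {..<n}" for k'
          proof -
            have c1: "cond_prob (p k')" and c2: "cond_prob (p' k')" and c3: "density_op d (rho k')" using cp that by auto
            have "0 \<le> p k' a x" using c1 a(1) x unfolding cond_prob_def by simp
            moreover have "0 \<le> p' k' b y" using c2 b(1) y unfolding cond_prob_def by simp
            moreover have "0 \<le> Re (Qf d (rho k') w)" using c3 unfolding density_op_def psd_Qf by simp
            moreover have "0 \<le> q k'" using q0 that by auto
            ultimately show ?thesis by simp
          qed
          have R1: "Re (Qf d (S1 a b x y) w) = (\<Sum>k<n. q k * p k a x * p' k b y * Re (Qf d (rho k) w))"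
            unfolding Q1 Re_sum by simp
          have "0 = \<epsilon> * Re (Qf d (S1 a b x y) w) + (1 - \<epsilon>) * Re (Qf d (S2 a b x y) w)"
          proof -
            have "Re (complex_of_real \<epsilon> * Qf d (S1 a b x y) w + complex_of_real (1 - \<epsilon>) * Qf d (S2 a b x y) w) = 0"
              using QS Qd by simp
            thus ?thesis by simp
          qed
          moreover have "0 \<le> (1 - \<epsilon>) * Re (Qf d (S2 a b x y) w)" using e1 R2 by simp
          moreover have "0 \<le> Re (Qf d (S1 a b x y) w)" unfolding R1 by (rule sum_nonneg) (rule terms)
          hence "0 \<le> \<epsilon> * Re (Qf d (S1 a b x y) w)" using ep by simp
          ultimately have "\<epsilon> * Re (Qf d (S1 a b x y) w) = 0" by linarith
          with ep have "Re (Qf d (S1 a b x y) w) = 0" by simp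
          hence "\<forall>k'\<in>{..<n}. q k' * p k' a x * p' k' b y * Re (Qf d (rho k') w) = 0"
          proof -
            have F0: "(\<Sum>k'<n. q k' * p k' a x * p' k' b y * Re (Qf d (rho k') w)) = 0" using R1 \<open>Re (Qf d (S1 a b x y) w) = 0\<close> by simp
            show ?thesis using iffD1[OF sum_nonneg_eq_0_iff[OF finite_lessThan terms] F0] .
          qed
          hence "q k * p k a x * p' k b y * Re (Qf d (rho k) w) = 0" using k(1) lessThan_iff by blast
          hence "Re (Qf d (rho k) w) = 0" using k a b by simp
          moreover have "Qf d (rho k) w \<in> \<real>" using psdk unfolding psd_Qf by simp
          ultimately show ?thesis by (intro real_zero)
        qed
        have "v c0 * rho k c c0 = v c * rho k c0 c0"
          by (rule rank1_transfer[OF psdk c0(1)]) (use Hw c c0 in auto)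
        hence "v c = (v c0 / rho k c0 c0) * rho k c c0" using c0(2) by (simp add: field_simps)
        thus "vv psi x (ax x) y (bx y) c = (vv psi x (ax x) y (bx y) c0 / rho k c0 c0) * rho k c c0"
          unfolding v_def a_def b_def .
      qed
      have "product_AB_C d psi"
        by (rule product_from_parallel[of ax bx d psi "\<lambda>x y. vv psi x (ax x) y (bx y) c0 / rho k c0 c0" "\<lambda>c. rho k c c0"])
           (use ax bx key in blast)+
      with assms(3) show False unfolding entangled_AB_C_def by simp
    qed
  qed
qed

end
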